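(* For every $d\in\mathbb{N}$, the cones $\mathfrak{P}_{2d}$ and $\mathfrak{S}_{2d}$ are full-dimensional cones in $\mathbb{R}^{\pi(2d)}$.
   Context: For $n\ge 1$, $i\ge1$ let $p_i^{(n)}=\frac1n(x_1^i+\dots+x_n^i)$, and for a partition $\lambda=(\lambda_1,\dots,\lambda_l)$ of $k$ (weakly decreasing positive integers summing to $k$) let $p^{(n)}_\lambda=\prod_i p^{(n)}_{\lambda_i}$. $\pi(k)$ is the number of partitions of $k$. For $n\ge 2d$, $\{p^{(n)}_\lambda:\lambda\vdash 2d\}$ is a basis of the space $H^S_{n,2d}$ of symmetric forms of degree $2d$ in $n$ variables, which identifies $H^S_{n,2d}$ with $\mathbb{R}^{\pi(2d)}$. Define $\mathfrak{P}_{2d}$ (resp. $\mathfrak{S}_{2d}$) as the set of $(c_\lambda)_{\lambda\vdash 2d}\in\mathbb{R}^{\pi(2d)}$ such that $\sum_\lambda c_\lambda p^{(n)}_\lambda$ is a nonnegative form (resp. a sum of squares of real forms) for every $n\ge 2d$. *)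

theory Defs
  imports Main "HOL-Analysis.Analysis"
begin

definition is_partition :: "nat \<Rightarrow> nat list \<Rightarrow> bool" where
  "is_partition k lam \<longleftrightarrow> sorted_wrt (\<ge>) lam \<and> (\<forall>i\<in>set lam. 0 < i) \<and> sum_list lam = k"

definition partitions :: "nat \<Rightarrow> nat list set" where
  "partitions k = {lam. is_partition k lam}"

(* normalized power sum p_i^(n)(x) = (1/n)(x_0^i + ... + x_{n-1}^i);
   points of R^n are x :: nat => real, only coordinates 0..n-1 are used *)
definition psum :: "nat \<Rightarrow> nat \<Rightarrow> (nat \<Rightarrow> real) \<Rightarrow> real" where
  "psum n i x = (1 / real n) * (\<Sum>j<n. x j ^ i)"

definition pprod :: "nat \<Rightarrow> nat list \<Rightarrow> (nat \<Rightarrow> real) \<Rightarrow> real" where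
  "pprod n lam x = prod_list (map (\<lambda>i. psum n i x) lam)"

definition sym_form :: "nat \<Rightarrow> nat \<Rightarrow> (nat list \<Rightarrow> real) \<Rightarrow> (nat \<Rightarrow> real) \<Rightarrow> real" where
  "sym_form k n c x = (\<Sum>lam\<in>partitions k. c lam * pprod n lam x)"

(* coefficient vectors in R^{pi(k)}: functions on partitions of k, zero elsewhere *)
definition coeff_space :: "nat \<Rightarrow> (nat list \<Rightarrow> real) set" where
  "coeff_space k = {c. \<forall>lam. lam \<notin> partitions k \<longrightarrow> c lam = 0}"

definition monomial_exps :: "nat \<Rightarrow> nat \<Rightarrow> (nat \<Rightarrow> nat) set" where
  "monomial_exps n d = {a. (\<forall>i\<ge>n. a i = 0) \<and> (\<Sum>i<n. a i) = d}"

definition is_form :: "nat \<Rightarrow> nat \<Rightarrow> ((nat \<Rightarrow> real) \<Rightarrow> real) \<Rightarrow> bool" where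
  "is_form n d q \<longleftrightarrow> (\<exists>coef :: (nat \<Rightarrow> nat) \<Rightarrow> real.
      q = (\<lambda>x. \<Sum>a\<in>monomial_exps n d. coef a * (\<Prod>i<n. x i ^ a i)))"

definition nonneg_fn :: "nat \<Rightarrow> ((nat \<Rightarrow> real) \<Rightarrow> real) \<Rightarrow> bool" where
  "nonneg_fn n f \<longleftrightarrow> (\<forall>x. f x \<ge> 0)"

definition is_sos :: "nat \<Rightarrow> nat \<Rightarrow> ((nat \<Rightarrow> real) \<Rightarrow> real) \<Rightarrow> bool" where
  "is_sos n d f \<longleftrightarrow> (\<exists>qs. (\<forall>q\<in>set qs. is_form n d q) \<and>
      (\<forall>x. f x = (\<Sum>q\<leftarrow>qs. (q x)\<^sup>2)))"

definition Pcone :: "nat \<Rightarrow> (nat list \<Rightarrow> real) set" where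
  "Pcone d = {c \<in> coeff_space (2*d).
      \<forall>n. n \<ge> 1 \<and> n \<ge> 2*d \<longrightarrow> nonneg_fn n (sym_form (2*d) n c)}"

definition Scone :: "nat \<Rightarrow> (nat list \<Rightarrow> real) set" where
  "Scone d = {c \<in> coeff_space (2*d).
      \<forall>n. n \<ge> 1 \<and> n \<ge> 2*d \<longrightarrow> is_sos n d (sym_form (2*d) n c)}"

definition is_cone_in :: "(nat list \<Rightarrow> real) set \<Rightarrow> bool" where
  "is_cone_in C \<longleftrightarrow> (\<forall>c\<in>C. \<forall>t::real. t \<ge> 0 \<longrightarrow> (\<lambda>lam. t * c lam) \<in> C)"

(* full-dimensional in R^{pi(k)}: nonempty interior in the (finite-dim.) coefficient space *)
definition full_dimensional :: "nat \<Rightarrow> (nat list \<Rightarrow> real) set \<Rightarrow> bool" where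
  "full_dimensional k C \<longleftrightarrow> (\<exists>c0\<in>C. \<exists>e>0. \<forall>c\<in>coeff_space k.
      (\<forall>lam\<in>partitions k. \<bar>c lam - c0 lam\<bar> < e) \<longrightarrow> c \<in> C)"

end

theory Submission
  imports Defs
begin

section \<open>Forms\<close>

lemma finite_monomial_exps: "finite (monomial_exps n d)"
proof -
  have "monomial_exps n d \<subseteq> (\<lambda>f i. if i < n then f i else 0) ` ({..<n} \<rightarrow>\<^sub>E {..d})"
  proof
    fix a assume a: "a \<in> monomial_exps n d"
    hence z: "\<forall>i\<ge>n. a i = 0" and s: "(\<Sum>i<n. a i) = d" by (auto simp: monomial_exps_def)
    have le: "\<And>i. i < n \<Longrightarrow> a i \<le> d"
      using s by (metis finite_lessThan lessThan_iff member_le_sum zero_le)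
    have "restrict a {..<n} \<in> {..<n} \<rightarrow>\<^sub>E {..d}" using le by auto
    moreover have "a = (\<lambda>i. if i < n then restrict a {..<n} i else 0)"
      using z by (auto simp: fun_eq_iff not_less)
    ultimately show "a \<in> (\<lambda>f i. if i < n then f i else 0) ` ({..<n} \<rightarrow>\<^sub>E {..d})" by blast
  qed
  thus ?thesis by (rule finite_subset) (intro finite_imageI finite_PiE; simp)
qed

lemma is_form_add: "is_form n d p \<Longrightarrow> is_form n d q \<Longrightarrow> is_form n d (\<lambda>x. p x + q x)"
proof -
  assume "is_form n d p" "is_form n d q"
  then obtain c1 c2 where p: "p = (\<lambda>x. \<Sum>a\<in>monomial_exps n d. c1 a * (\<Prod>i<n. x i ^ a i))"
     and q: "q = (\<lambda>x. \<Sum>a\<in>monomial_exps n d. c2 a * (\<Prod>i<n. x i ^ a i))" by (auto simp: is_form_def)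
  show ?thesis unfolding is_form_def
    by (rule exI[of _ "\<lambda>a. c1 a + c2 a"]) (simp add: p q fun_eq_iff sum.distrib distrib_right)
qed

lemma is_form_scale: "is_form n d p \<Longrightarrow> is_form n d (\<lambda>x. c * p x)"
proof -
  assume "is_form n d p"
  then obtain c1 where p: "p = (\<lambda>x. \<Sum>a\<in>monomial_exps n d. c1 a * (\<Prod>i<n. x i ^ a i))"
    by (auto simp: is_form_def)
  show ?thesis unfolding is_form_def
    by (rule exI[of _ "\<lambda>a. c * c1 a"]) (simp add: p fun_eq_iff sum_distrib_left mult.assoc)
qed

lemma monomial_exps_0: "monomial_exps n 0 = {\<lambda>_. 0}"
proof -
  have "a = (\<lambda>_. 0)" if "a \<in> monomial_exps n 0" for a
  proof -
    from that have z: "\<forall>i\<ge>n. a i = 0" and s: "(\<Sum>i<n. a i) = 0" by (auto simp: monomial_exps_def)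
    from s have "\<forall>i<n. a i = 0" by simp
    with z show ?thesis by (auto simp: fun_eq_iff not_less[symmetric])
  qed
  thus ?thesis by (auto simp: monomial_exps_def)
qed

lemma is_form_const: "is_form n 0 (\<lambda>x. c)"
  unfolding is_form_def monomial_exps_0 by (rule exI[of _ "\<lambda>_. c"]) simp

lemma is_form_shift:
  assumes q: "is_form n d q" and j: "j < n"
  shows "is_form n (Suc d) (\<lambda>x. x j * q x)"
proof -
  obtain c1 where qd: "q = (\<lambda>x. \<Sum>a\<in>monomial_exps n d. c1 a * (\<Prod>i<n. x i ^ a i))"
    using q by (auto simp: is_form_def)
  define inc where "inc a = a(j := Suc (a j))" for a :: "nat \<Rightarrow> nat"
  define c2 where "c2 b = (if 0 < b j then c1 (b(j := b j - 1)) else 0)" for b :: "nat \<Rightarrow> nat"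
  have Pinc: "(\<Prod>i<n. x i ^ inc a i) = x j * (\<Prod>i<n. x i ^ a i)" for x :: "nat \<Rightarrow> real" and a
  proof -
    have "(\<Prod>i<n. x i ^ inc a i) = x j ^ inc a j * (\<Prod>i\<in>{..<n}-{j}. x i ^ inc a i)"
      using j by (simp add: prod.remove)
    also have "(\<Prod>i\<in>{..<n}-{j}. x i ^ inc a i) = (\<Prod>i\<in>{..<n}-{j}. x i ^ a i)"
      by (rule prod.cong) (auto simp: inc_def)
    also have "(\<Prod>i<n. x i ^ a i) = x j ^ a j * (\<Prod>i\<in>{..<n}-{j}. x i ^ a i)"
      using j by (simp add: prod.remove)
    ultimately show ?thesis by (simp add: inc_def)
  qed
  have sinc: "(\<Sum>i<n. inc a i) = Suc (\<Sum>i<n. a i)" for a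
  proof -
    have "(\<Sum>i<n. inc a i) = inc a j + (\<Sum>i\<in>{..<n}-{j}. inc a i)"
      using j by (simp add: sum.remove)
    also have "(\<Sum>i\<in>{..<n}-{j}. inc a i) = (\<Sum>i\<in>{..<n}-{j}. a i)"
      by (rule sum.cong) (auto simp: inc_def)
    also have "(\<Sum>i<n. a i) = a j + (\<Sum>i\<in>{..<n}-{j}. a i)"
      using j by (simp add: sum.remove)
    ultimately show ?thesis by (simp add: inc_def)
  qed
  have injinc: "inj_on inc (monomial_exps n d)"
    by (rule inj_onI) (simp add: inc_def fun_eq_iff, metis fun_upd_apply nat.inject)
  have img: "inc ` monomial_exps n d = {b \<in> monomial_exps n (Suc d). 0 < b j}"
  proof
    show "inc ` monomial_exps n d \<subseteq> {b \<in> monomial_exps n (Suc d). 0 < b j}"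
      using j sinc by (auto simp: monomial_exps_def inc_def)
    show "{b \<in> monomial_exps n (Suc d). 0 < b j} \<subseteq> inc ` monomial_exps n d"
    proof
      fix b assume b: "b \<in> {b \<in> monomial_exps n (Suc d). 0 < b j}"
      define a where "a = b(j := b j - 1)"
      have ia: "inc a = b" using b by (auto simp: inc_def a_def fun_eq_iff)
      have "Suc (\<Sum>i<n. a i) = Suc d" using sinc[of a] ia b by (simp add: monomial_exps_def)
      hence "a \<in> monomial_exps n d" using b j by (auto simp: monomial_exps_def a_def)
      with ia show "b \<in> inc ` monomial_exps n d" by blast
    qed
  qed
  have c2inc: "c2 (inc a) = c1 a" for a
    by (simp add: c2_def inc_def)
  show ?thesis unfolding is_form_def
  proof (rule exI[of _ c2], rule ext)
    fix x :: "nat \<Rightarrow> real"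
    have "x j * q x = (\<Sum>a\<in>monomial_exps n d. c2 (inc a) * (\<Prod>i<n. x i ^ inc a i))"
      by (simp add: qd sum_distrib_left Pinc c2inc mult.left_commute)
    also have "\<dots> = (\<Sum>b\<in>inc ` monomial_exps n d. c2 b * (\<Prod>i<n. x i ^ b i))"
      using sum.reindex[OF injinc, of "\<lambda>b. c2 b * (\<Prod>i<n. x i ^ b i)"] by simp
    also have "\<dots> = (\<Sum>b\<in>monomial_exps n (Suc d). c2 b * (\<Prod>i<n. x i ^ b i))"
      unfolding img
      by (rule sum.mono_neutral_left) (auto simp: finite_monomial_exps c2_def)
    finally show "x j * q x = (\<Sum>b\<in>monomial_exps n (Suc d). c2 b * (\<Prod>i<n. x i ^ b i))" .
  qed
qed

lemma is_form_shift_pow: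
  assumes q: "is_form n d q" and j: "j < n"
  shows "is_form n (d + g) (\<lambda>x. x j ^ g * q x)"
proof (induction g)
  case 0 then show ?case using q by simp
next
  case (Suc g)
  from is_form_shift[OF Suc j] show ?case by (simp add: mult.assoc)
qed

definition mon :: "nat list \<Rightarrow> nat list \<Rightarrow> (nat \<Rightarrow> real) \<Rightarrow> real" where
  "mon g js x = prod_list (map2 (\<lambda>e j. x j ^ e) g js)"

lemma mon_form: "\<forall>j\<in>set js. j < n \<Longrightarrow> length g = length js \<Longrightarrow> is_form n (sum_list g) (mon g js)"
proof (induction js arbitrary: g)
  case Nil then show ?case by (simp add: mon_def is_form_const)
next
  case (Cons j js)
  then obtain e g' where g: "g = e # g'" by (cases g) auto
  have "is_form n (sum_list g' + e) (\<lambda>x. x j ^ e * mon g' js x)"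
    using Cons g by (intro is_form_shift_pow) auto
  then show ?case by (simp add: g mon_def add.commute)
qed

lemma mon_mult: "length a = length js \<Longrightarrow> length b = length js \<Longrightarrow>
   mon a js x * mon b js x = mon (map2 (+) a b) js x"
proof (induction js arbitrary: a b)
  case Nil then show ?case by (simp add: mon_def)
next
  case (Cons j js)
  then obtain e a' f b' where "a = e # a'" "b = f # b'" by (cases a; cases b) auto
  with Cons show ?case by (simp add: mon_def power_add algebra_simps)
qed

section \<open>Tuples\<close>

fun tuples :: "nat \<Rightarrow> nat \<Rightarrow> nat list list" where
  "tuples n 0 = [[]]"
| "tuples n (Suc l) = concat (map (\<lambda>k. map (\<lambda>t. k # t) (tuples n l)) [0..<n])"

lemma tuples_set: "js \<in> set (tuples n l) \<Longrightarrow> length js = l \<and> (\<forall>j\<in>set js. j < n)"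
  by (induction l arbitrary: js) auto

lemma sum_list_concat_map: "sum_list (concat xss) = sum_list (map sum_list xss)"
  for xss :: "real list list"
  by (induction xss) auto

lemma tuples_sum:
  "length g = l \<Longrightarrow> sum_list (map (\<lambda>js. mon g js x) (tuples n l)) = prod_list (map (\<lambda>e. \<Sum>k<n. x k ^ e) g)"
proof (induction g arbitrary: l)
  case Nil then show ?case by (simp add: mon_def)
next
  case (Cons e g)
  then obtain l' where l: "l = Suc l'" "length g = l'" by auto
  have "sum_list (map (\<lambda>js. mon (e # g) js x) (tuples n l))
      = sum_list (map (\<lambda>k. sum_list (map (\<lambda>t. x k ^ e * mon g t x) (tuples n l'))) [0..<n])"
    by (simp add: l sum_list_concat_map map_concat o_def mon_def)
  also have "\<dots> = sum_list (map (\<lambda>k. x k ^ e * prod_list (map (\<lambda>e. \<Sum>k<n. x k ^ e) g)) [0..<n])"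
    using Cons.IH[OF l(2)] by (simp add: sum_list_const_mult)
  also have "\<dots> = (\<Sum>k<n. x k ^ e) * prod_list (map (\<lambda>e. \<Sum>k<n. x k ^ e) g)"
    by (simp add: interv_sum_list_conv_sum_set_nat sum_distrib_right atLeast0LessThan)
  finally show ?case by simp
qed

lemma psum_sum: "n \<ge> 1 \<Longrightarrow> (\<Sum>k<n. x k ^ e) = real n * psum n e x"
  by (simp add: psum_def)

lemma prod_list_scale: "prod_list (map (\<lambda>e. c * f e) g) = c ^ length g * prod_list (map f g)"
  for c :: real by (induction g) (auto simp: algebra_simps)

lemma tuples_sum_pprod:
  "n \<ge> 1 \<Longrightarrow> length g = l \<Longrightarrow> sum_list (map (\<lambda>js. mon g js x) (tuples n l)) = real n ^ l * pprod n g x"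
  by (simp add: tuples_sum psum_sum prod_list_scale pprod_def)

section \<open>Sums of squares\<close>

lemma sos_zero: "is_sos n d (\<lambda>x. 0)"
  unfolding is_sos_def by (rule exI[of _ "[]"]) simp

lemma sos_add: "is_sos n d f \<Longrightarrow> is_sos n d g \<Longrightarrow> is_sos n d (\<lambda>x. f x + g x)"
  unfolding is_sos_def
  apply (elim exE conjE)
  subgoal for qs1 qs2 by (rule exI[of _ "qs1 @ qs2"]) auto
  done

lemma sos_scale: "0 \<le> c \<Longrightarrow> is_sos n d f \<Longrightarrow> is_sos n d (\<lambda>x. c * f x)"
  unfolding is_sos_def
  apply (elim exE conjE)
  subgoal for qs
    by (rule exI[of _ "map (\<lambda>q x. sqrt c * q x) qs"])
      (auto simp: is_form_scale power_mult_distrib sum_list_const_mult o_def)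
  done

lemma sos_cong: "is_sos n d f \<Longrightarrow> (\<And>x. g x = f x) \<Longrightarrow> is_sos n d g"
proof -
  assume "is_sos n d f" "\<And>x. g x = f x"
  then have "g = f" by auto
  with \<open>is_sos n d f\<close> show ?thesis by simp
qed

lemma sos_sum: "finite A \<Longrightarrow> (\<And>a. a \<in> A \<Longrightarrow> is_sos n d (f a)) \<Longrightarrow> is_sos n d (\<lambda>x. \<Sum>a\<in>A. f a x)"
proof (induction A rule: finite_induct)
  case empty then show ?case by (simp add: sos_zero)
next
  case (insert a A)
  then show ?case using sos_add[of n d "f a" "\<lambda>x. \<Sum>a\<in>A. f a x"] by simp
qed

lemma map2_self: "map2 (+) a a = map (\<lambda>e. 2*e) (a::nat list)"
  by (induction a) auto

lemma aux_cancel: "N \<noteq> 0 \<Longrightarrow> (1/N)*(N*A + N*B + 2 * s * (N*C)) = A+B+2 * s * C" for N :: real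
  by (simp add: field_simps)

lemma sos_pair_sign:
  assumes n: "n \<ge> 1" and la: "length a = length b" and sa: "sum_list a = d" and sb: "sum_list b = d"
    and s: "s * s = (1::real)"
  shows "is_sos n d (\<lambda>x. pprod n (map (\<lambda>e. 2*e) a) x + pprod n (map (\<lambda>e. 2*e) b) x + 2 * s * pprod n (map2 (+) a b) x)"
proof -
  define l where "l = length a"
  define qs where "qs = map (\<lambda>js x. (1 / sqrt (real n ^ l)) * (mon a js x + s * mon b js x)) (tuples n l)"
  have forms: "\<forall>q\<in>set qs. is_form n d q"
  proof
    fix q assume "q \<in> set qs"
    then obtain js where js: "js \<in> set (tuples n l)" and q: "q = (\<lambda>x. (1 / sqrt (real n ^ l)) * (mon a js x + s * mon b js x))"
      by (auto simp: qs_def)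
    from tuples_set[OF js] have "length js = l" "\<forall>j\<in>set js. j < n" by auto
    then have "is_form n d (mon a js)" "is_form n d (mon b js)"
      using mon_form[of js n a] mon_form[of js n b] la sa sb by (auto simp: l_def)
    then show "is_form n d q" unfolding q
      by (intro is_form_scale[of n d "\<lambda>x. mon a js x + s * mon b js x"]
        is_form_add[of n d "mon a js" "\<lambda>x. s * mon b js x"] is_form_scale[of n d "mon b js" s])
  qed
  have sq: "(mon a js x + s * mon b js x)^2 = mon (map (\<lambda>e. 2*e) a) js x + mon (map (\<lambda>e. 2*e) b) js x
      + 2 * s * mon (map2 (+) a b) js x" if "js \<in> set (tuples n l)" for js x
  proof -
    from tuples_set[OF that] have lj: "length js = l" by auto
    have aa: "mon a js x * mon a js x = mon (map (\<lambda>e. 2*e) a) js x"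
    proof -
      have "mon a js x * mon a js x = mon (map2 (+) a a) js x"
        by (rule mon_mult) (use lj in \<open>simp_all add: l_def\<close>)
      then show ?thesis by (simp only: map2_self)
    qed
    have bb: "mon b js x * mon b js x = mon (map (\<lambda>e. 2*e) b) js x"
    proof -
      have "mon b js x * mon b js x = mon (map2 (+) b b) js x"
        by (rule mon_mult) (use lj la in \<open>simp_all add: l_def\<close>)
      then show ?thesis by (simp only: map2_self)
    qed
    have ab: "mon a js x * mon b js x = mon (map2 (+) a b) js x"
      by (rule mon_mult) (use lj la in \<open>simp_all add: l_def\<close>)
    have "(mon a js x + s * mon b js x)^2 = mon a js x * mon a js x + (s * s) * (mon b js x * mon b js x)
       + 2 * s * (mon a js x * mon b js x)" by (simp add: power2_eq_square algebra_simps)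
    then show ?thesis using aa bb ab s by simp
  qed
  have npos: "real n ^ l > 0" using n by simp
  show ?thesis unfolding is_sos_def
  proof (intro exI[of _ qs] conjI allI)
    show "\<forall>q\<in>set qs. is_form n d q" by (rule forms)
    fix x
    have c2: "(1 / sqrt (real n ^ l))^2 = 1 / real n ^ l" using npos by (simp add: power_divide)
    have mapeq: "map (\<lambda>js. (mon a js x + s * mon b js x)^2) (tuples n l)
       = map (\<lambda>js. mon (map (\<lambda>e. 2*e) a) js x + mon (map (\<lambda>e. 2*e) b) js x
      + 2 * s * mon (map2 (+) a b) js x) (tuples n l)"
      by (rule map_cong[OF refl]) (rule sq)
    have sums: "sum_list (map (\<lambda>js. mon (map (\<lambda>e. 2*e) a) js x + mon (map (\<lambda>e. 2*e) b) js x
      + 2 * s * mon (map2 (+) a b) js x) (tuples n l))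
       = sum_list (map (\<lambda>js. mon (map (\<lambda>e. 2*e) a) js x) (tuples n l)) + sum_list (map (\<lambda>js. mon (map (\<lambda>e. 2*e) b) js x) (tuples n l))
         + 2 * s * sum_list (map (\<lambda>js. mon (map2 (+) a b) js x) (tuples n l))"
      by (simp only: sum_list_addf sum_list_const_mult)
    have tp: "sum_list (map (\<lambda>js. mon g js x) (tuples n l)) = real n ^ l * pprod n g x" if "length g = l" for g
      using tuples_sum_pprod[OF n that] .
    have l1: "length (map (\<lambda>e. 2*e) a) = l" "length (map (\<lambda>e. 2*e) b) = l" "length (map2 (+) a b) = l"
      using la by (auto simp: l_def)
    have "(\<Sum>q\<leftarrow>qs. (q x)\<^sup>2) = sum_list (map (\<lambda>js. (1 / sqrt (real n ^ l))^2 * (mon a js x + s * mon b js x)^2) (tuples n l))"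
      unfolding qs_def by (simp only: map_map o_def power_mult_distrib)
    also have "\<dots> = (1 / real n ^ l) * sum_list (map (\<lambda>js. (mon a js x + s * mon b js x)^2) (tuples n l))"
      by (simp only: sum_list_const_mult c2)
    also have "\<dots> = (1 / real n ^ l) * (real n ^ l * pprod n (map (\<lambda>e. 2*e) a) x + real n ^ l * pprod n (map (\<lambda>e. 2*e) b) x + 2 * s * (real n ^ l * pprod n (map2 (+) a b) x))"
      by (simp only: mapeq sums tp[OF l1(1)] tp[OF l1(2)] tp[OF l1(3)])
    also have "\<dots> = pprod n (map (\<lambda>e. 2*e) a) x + pprod n (map (\<lambda>e. 2*e) b) x + 2 * s * pprod n (map2 (+) a b) x"
      by (rule aux_cancel) (use npos in simp)
    finally show "pprod n (map (\<lambda>e. 2*e) a) x + pprod n (map (\<lambda>e. 2*e) b) x + 2 * s * pprod n (map2 (+) a b) x = (\<Sum>q\<leftarrow>qs. (q x)\<^sup>2)"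
      by (rule sym)
  qed
qed

lemma sos_pair:
  assumes n: "n \<ge> 1" and la: "length a = length b" and sa: "sum_list a = d" and sb: "sum_list b = d"
    and t: "\<bar>t\<bar> \<le> (1::real)"
  shows "is_sos n d (\<lambda>x. pprod n (map (\<lambda>e. 2*e) a) x + pprod n (map (\<lambda>e. 2*e) b) x + 2 * t * pprod n (map2 (+) a b) x)"
proof -
  let ?A = "\<lambda>x. pprod n (map (\<lambda>e. 2*e) a) x" and ?B = "\<lambda>x. pprod n (map (\<lambda>e. 2*e) b) x"
    and ?C = "\<lambda>x. pprod n (map2 (+) a b) x"
  have p: "is_sos n d (\<lambda>x. ?A x + ?B x + 2*1*?C x)" by (rule sos_pair_sign[OF n la sa sb]) simp
  have m: "is_sos n d (\<lambda>x. ?A x + ?B x + 2*(-1)*?C x)" by (rule sos_pair_sign[OF n la sa sb]) simp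
  have h: "is_sos n d (\<lambda>x. (1+t)/2 * (?A x + ?B x + 2*1*?C x) + (1-t)/2 * (?A x + ?B x + 2*(-1)*?C x))"
    using t by (intro sos_add[OF sos_scale sos_scale] p m) auto
  have eq: "(1+t)/2 * (A + B + 2*1*C) + (1-t)/2 * (A + B + 2*(-1)*C) = A + B + 2 * t * C" for A B C :: real
    by (simp add: field_simps)
  from h show ?thesis by (rule sos_cong) (rule eq[symmetric])
qed

section \<open>Normalisation of exponent lists\<close>

definition normp :: "nat list \<Rightarrow> nat list" where
  "normp g = rev (sort (filter (\<lambda>e. e \<noteq> 0) g))"

lemma normp_set: "set (normp g) = set g - {0}"
  by (auto simp: normp_def)

lemma sum_list_filter_nz: "sum_list (filter (\<lambda>e. e \<noteq> 0) g) = sum_list (g::nat list)"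
  by (induction g) auto

lemma normp_part: "normp g \<in> partitions (sum_list g)"
proof -
  have "sum_list (normp g) = sum_list (sort (filter (\<lambda>e. e \<noteq> 0) g))"
    by (simp add: normp_def)
  also have "\<dots> = sum_list (filter (\<lambda>e. e \<noteq> 0) g)"
    by (simp only: sum_mset_sum_list[symmetric] mset_sort)
  finally have s: "sum_list (normp g) = sum_list g" by (metis sum_list_filter_nz)
  have "sorted_wrt (\<ge>) (normp g)"
    by (simp add: normp_def sorted_wrt_rev)
  then show ?thesis using s by (auto simp: partitions_def is_partition_def normp_set)
qed

lemma prod_list_filter_nz: "n \<ge> 1 \<Longrightarrow> pprod n (filter (\<lambda>e. e \<noteq> 0) g) x = pprod n g x"
  by (induction g) (auto simp: pprod_def psum_def)

lemma normp_pprod: "n \<ge> 1 \<Longrightarrow> pprod n (normp g) x = pprod n g x"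
proof -
  assume n: "n \<ge> 1"
  have "pprod n (normp g) x = pprod n (sort (filter (\<lambda>e. e \<noteq> 0) g)) x"
    by (simp add: normp_def pprod_def rev_map[symmetric])
  also have "\<dots> = pprod n (filter (\<lambda>e. e \<noteq> 0) g) x"
    unfolding pprod_def by (simp only: prod_mset_prod_list[symmetric] mset_map mset_sort)
  finally show ?thesis using prod_list_filter_nz[OF n] by simp
qed

lemma split_list:
  "k \<le> sum_list (l::nat list) \<Longrightarrow> \<exists>a b. length a = length l \<and> length b = length l \<and>
     map2 (+) a b = l \<and> sum_list a = k \<and> sum_list b = sum_list l - k"
proof (induction l arbitrary: k)
  case Nil then show ?case by simp
next
  case (Cons h t)
  define a0 where "a0 = min h k"
  have "k - a0 \<le> sum_list t" using Cons.prems by (auto simp: a0_def)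
  from Cons.IH[OF this] obtain a b where ab: "length a = length t" "length b = length t"
    "map2 (+) a b = t" "sum_list a = k - a0" "sum_list b = sum_list t - (k - a0)" by blast
  show ?case
    by (rule exI[of _ "a0 # a"], rule exI[of _ "(h - a0) # b"])
      (use ab Cons.prems in \<open>auto simp: a0_def\<close>)
qed

lemma finite_partitions: "finite (partitions k)"
proof -
  have len: "length xs \<le> sum_list xs" if "\<forall>i\<in>set xs. 0 < i" for xs :: "nat list"
    using that by (induction xs) auto
  have "partitions k \<subseteq> {xs. set xs \<subseteq> {..k} \<and> length xs \<le> k}"
    by (auto simp: partitions_def is_partition_def len member_le_sum_list)
  then show ?thesis by (rule finite_subset) (simp add: finite_lists_length_le)
qed

definition c0 :: "nat \<Rightarrow> nat list \<Rightarrow> real" where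
  "c0 d lam = (if lam \<in> partitions (2*d) \<and> (\<forall>r\<in>set lam. even r) then 2 * real (card (partitions (2*d))) else 0)"

lemma even_sos:
  assumes n: "n \<ge> 1" and r: "rho \<in> partitions (2*d)" and ev: "\<forall>r\<in>set rho. even r"
  shows "is_sos n d (pprod n rho)"
proof -
  define h where "h = map (\<lambda>r. r div 2) rho"
  have hh: "map (\<lambda>e. 2*e) h = rho"
    unfolding h_def map_map o_def by (rule map_idI) (use ev in auto)
  have h2: "map2 (+) h h = rho" by (simp only: map2_self hh)
  have dd: "sum_list (map (\<lambda>e. 2*e) h) = 2 * sum_list h" by (induction h) auto
  have "2 * sum_list h = sum_list rho"
    using dd hh by simp
  then have sh: "sum_list h = d" using r by (simp add: partitions_def is_partition_def)
  have "is_sos n d (\<lambda>x. pprod n (map (\<lambda>e. 2*e) h) x + pprod n (map (\<lambda>e. 2*e) h) x + 2*1*pprod n (map2 (+) h h) x)"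
    by (rule sos_pair[OF n refl sh sh]) simp
  then have "is_sos n d (\<lambda>x. 1/4 * (pprod n (map (\<lambda>e. 2*e) h) x + pprod n (map (\<lambda>e. 2*e) h) x + 2*1*pprod n (map2 (+) h h) x))"
    by (rule sos_scale[rotated]) simp
  then show ?thesis by (rule sos_cong) (simp add: hh h2)
qed

lemma ball_sos:
  assumes c: "c \<in> coeff_space (2*d)"
    and cl: "\<forall>lam\<in>partitions (2*d). \<bar>c lam - c0 d lam\<bar> < 1" and n: "n \<ge> 1"
  shows "is_sos n d (sym_form (2*d) n c)"
proof -
  define Part where "Part = partitions (2*d)"
  define E where "E = {rho \<in> Part. \<forall>r\<in>set rho. even r}"
  define P where "P = card Part"
  have fP: "finite Part" by (simp add: Part_def finite_partitions)
  have fE: "finite E" using fP by (simp add: E_def)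
  have "\<forall>lam. \<exists>ab. lam \<in> Part \<longrightarrow> (length (fst ab) = length (snd ab) \<and> map2 (+) (fst ab) (snd ab) = lam
      \<and> sum_list (fst ab) = d \<and> sum_list (snd ab) = d)"
  proof
    fix lam
    show "\<exists>ab. lam \<in> Part \<longrightarrow> (length (fst ab) = length (snd ab) \<and> map2 (+) (fst ab) (snd ab) = lam
      \<and> sum_list (fst ab) = d \<and> sum_list (snd ab) = d)"
    proof (cases "lam \<in> Part")
      case True
      then have s: "sum_list lam = 2*d" by (simp add: Part_def partitions_def is_partition_def)
      then obtain a b where "length a = length lam" "length b = length lam" "map2 (+) a b = lam"
        "sum_list a = d" "sum_list b = sum_list lam - d" using split_list[of d lam] by auto
      then show ?thesis using s by (intro exI[of _ "(a,b)"]) auto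
    qed auto
  qed
  then obtain AB where AB0: "\<forall>lam. lam \<in> Part \<longrightarrow> (length (fst (AB lam)) = length (snd (AB lam)) \<and>
      map2 (+) (fst (AB lam)) (snd (AB lam)) = lam \<and> sum_list (fst (AB lam)) = d \<and> sum_list (snd (AB lam)) = d)"
    by (rule choice[THEN exE])
  have AB: "\<And>lam. lam \<in> Part \<Longrightarrow> length (fst (AB lam)) = length (snd (AB lam)) \<and>
      map2 (+) (fst (AB lam)) (snd (AB lam)) = lam \<and> sum_list (fst (AB lam)) = d \<and> sum_list (snd (AB lam)) = d"
    using AB0 by blast
  define mu where "mu lam = normp (map (\<lambda>e. 2*e) (fst (AB lam)))" for lam
  define nu where "nu lam = normp (map (\<lambda>e. 2*e) (snd (AB lam)))" for lam
  have dbl: "sum_list (map (\<lambda>e. 2*e) g) = 2 * sum_list g" for g :: "nat list"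
    by (simp add: sum_list_const_mult)
  have muE: "mu lam \<in> E" "nu lam \<in> E" if "lam \<in> Part" for lam
    using normp_part[of "map (\<lambda>e. 2*e) (fst (AB lam))"] normp_part[of "map (\<lambda>e. 2*e) (snd (AB lam))"]
      AB[OF that]
    by (auto simp: mu_def nu_def E_def Part_def normp_set dbl)
  define T where "T x = (\<Sum>rho\<in>E. pprod n rho x)" for x
  define H where "H rho x = T x - pprod n rho x" for rho x
  have Hsos: "is_sos n d (H rho)" if "rho \<in> E" for rho
  proof -
    have "is_sos n d (\<lambda>x. \<Sum>r\<in>E-{rho}. pprod n r x)"
      using fE by (intro sos_sum even_sos[OF n]) (auto simp: E_def Part_def)
    then show ?thesis
      by (rule sos_cong) (simp add: H_def T_def sum.remove[OF fE that])
  qed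
  define G where "G lam x = pprod n (mu lam) x + pprod n (nu lam) x + 2*((c lam - c0 d lam)/2) * pprod n lam x" for lam x
  have Gsos: "is_sos n d (G lam)" if "lam \<in> Part" for lam
  proof -
    have t: "\<bar>(c lam - c0 d lam)/2\<bar> \<le> 1" using cl that by (auto simp: Part_def)
    from AB[OF that] have "is_sos n d (\<lambda>x. pprod n (map (\<lambda>e. 2*e) (fst (AB lam))) x
       + pprod n (map (\<lambda>e. 2*e) (snd (AB lam))) x + 2*((c lam - c0 d lam)/2) * pprod n (map2 (+) (fst (AB lam)) (snd (AB lam))) x)"
      using t by (intro sos_pair[OF n]) auto
    then show ?thesis by (rule sos_cong) (simp add: G_def mu_def nu_def normp_pprod[OF n] AB[OF that])
  qed
  have "is_sos n d (\<lambda>x. \<Sum>lam\<in>Part. G lam x + H (mu lam) x + H (nu lam) x)"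
    using fP by (intro sos_sum[of Part n d "\<lambda>lam x. G lam x + H (mu lam) x + H (nu lam) x"]
        sos_add[OF sos_add] Gsos Hsos muE) auto
  then show ?thesis
  proof (rule sos_cong)
    fix x
    have "(\<Sum>lam\<in>Part. G lam x + H (mu lam) x + H (nu lam) x)
        = (\<Sum>lam\<in>Part. (c lam - c0 d lam) * pprod n lam x + 2 * T x)"
      by (rule sum.cong) (auto simp: G_def H_def)
    also have "\<dots> = (\<Sum>lam\<in>Part. (c lam - c0 d lam) * pprod n lam x) + 2 * real P * T x"
      by (simp add: sum.distrib P_def)
    also have "2 * real P * T x = (\<Sum>lam\<in>Part. c0 d lam * pprod n lam x)"
    proof -
      have "(\<Sum>lam\<in>Part. c0 d lam * pprod n lam x) = (\<Sum>lam\<in>Part. if (\<forall>r\<in>set lam. even r) then 2 * real P * pprod n lam x else 0)"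
        by (rule sum.cong) (auto simp: c0_def P_def Part_def)
      also have "\<dots> = (\<Sum>lam\<in>E. 2 * real P * pprod n lam x)"
        unfolding E_def by (rule sum.inter_filter[OF fP, symmetric])
      finally show ?thesis by (simp add: T_def sum_distrib_left)
    qed
    also have "(\<Sum>lam\<in>Part. (c lam - c0 d lam) * pprod n lam x) + (\<Sum>lam\<in>Part. c0 d lam * pprod n lam x)
        = sym_form (2*d) n c x"
      by (simp add: sym_form_def Part_def sum.distrib[symmetric] algebra_simps)
    finally show "sym_form (2*d) n c x = (\<Sum>lam\<in>Part. G lam x + H (mu lam) x + H (nu lam) x)" by simp
  qed
qed

lemma sos_nonneg: "is_sos n d f \<Longrightarrow> nonneg_fn n f"
  unfolding is_sos_def nonneg_fn_def by (auto intro!: sum_list_nonneg)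

lemma c0_space: "c0 d \<in> coeff_space (2*d)"
  by (simp add: c0_def coeff_space_def)

lemma ball_in_S:
  assumes "c \<in> coeff_space (2*d)" "\<forall>lam\<in>partitions (2*d). \<bar>c lam - c0 d lam\<bar> < 1"
  shows "c \<in> Scone d"
  using assms ball_sos by (auto simp: Scone_def)

lemma S_sub_P: "Scone d \<subseteq> Pcone d"
  by (auto simp: Scone_def Pcone_def sos_nonneg)

lemma sym_form_scale: "sym_form k n (\<lambda>lam. t * c lam) x = t * sym_form k n c x"
  by (simp add: sym_form_def sum_distrib_left mult.assoc)

lemma space_scale: "c \<in> coeff_space k \<Longrightarrow> (\<lambda>lam. t * c lam) \<in> coeff_space k"
  by (simp add: coeff_space_def)

theorem theorem1p2:
  fixes d :: nat
  shows "is_cone_in (Pcone d) \<and> full_dimensional (2*d) (Pcone d) \<and>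
         is_cone_in (Scone d) \<and> full_dimensional (2*d) (Scone d)"
proof (intro conjI)
  show "is_cone_in (Pcone d)"
    unfolding is_cone_in_def Pcone_def nonneg_fn_def
    by (auto simp: sym_form_scale space_scale)
  show "is_cone_in (Scone d)"
    unfolding is_cone_in_def Scone_def
  proof (intro ballI allI impI CollectI conjI)
    fix c t assume c: "c \<in> {c \<in> coeff_space (2 * d). \<forall>n. 1 \<le> n \<and> 2 * d \<le> n \<longrightarrow> is_sos n d (sym_form (2 * d) n c)}"
      and t: "0 \<le> (t::real)"
    show "(\<lambda>lam. t * c lam) \<in> coeff_space (2*d)" using c by (simp add: space_scale)
    fix n assume "1 \<le> n \<and> 2 * d \<le> n"
    with c have "is_sos n d (sym_form (2 * d) n c)" by auto
    then have "is_sos n d (\<lambda>x. t * sym_form (2 * d) n c x)" using t by (rule sos_scale[rotated])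
    then show "is_sos n d (sym_form (2 * d) n (\<lambda>lam. t * c lam))"
      by (rule sos_cong) (simp add: sym_form_scale)
  qed
  have fd: "c \<in> Scone d" if "c \<in> coeff_space (2*d)" "\<forall>lam\<in>partitions (2*d). \<bar>c lam - c0 d lam\<bar> < 1" for c
    using ball_in_S that by blast
  have c0S: "c0 d \<in> Scone d" using fd[OF c0_space] by simp
  show "full_dimensional (2*d) (Scone d)"
    unfolding full_dimensional_def using c0S fd by (intro bexI[of _ "c0 d"] exI[of _ 1]) auto
  show "full_dimensional (2*d) (Pcone d)"
    unfolding full_dimensional_def using c0S fd S_sub_P by (intro bexI[of _ "c0 d"] exI[of _ 1]) auto
qed

end
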